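(* Let $k\in\mathbb{N}$ be even and let $n,m$ be odd integers. Then $K_{k,2}(n,m)=2K_{k,1}\left(\frac{n}{2},\frac{m}{2}\right)$.
   Context: For even $k\in\mathbb{N}$ put $k^*=4k$ if $\gcd(k,6)=2$ and $k^*=36k$ if $6\mid k$. For $a\in\{1,2\}$ and $n,m\in\frac12\mathbb{Z}$ define $$K_{k,a}(n,m)=\sum_{\substack{0\le h<ak\\ \gcd(h,ak)=1}} e^{\frac{2\pi i}{ak}(-nh+mh')},$$ where for each $h$, $h'$ is an integer with $hh'\equiv-1\pmod{k^*}$. *)

theory Defs
  imports Complex_Main "HOL-Number_Theory.Cong"
begin

(* k^* = 4k if gcd(k,6) = 2, and 36k if 6 divides k (only meaningful for even k) *)
definition kstar :: "nat \<Rightarrow> nat" where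
  "kstar k = (if gcd k 6 = 2 then 4 * k else 36 * k)"

definition hprime :: "nat \<Rightarrow> int \<Rightarrow> int" where
  "hprime k h = (SOME h'. [h * h' = - 1] (mod int (kstar k)))"

(* K_{k,a}(n,m), with n, m real (intended: half-integers) *)
definition Kloos :: "nat \<Rightarrow> nat \<Rightarrow> real \<Rightarrow> real \<Rightarrow> complex" where
  "Kloos k a n m =
     (\<Sum>h\<in>{h. h < a * k \<and> coprime h (a * k)}.
        exp (2 * pi * \<i> * complex_of_real
              ((- n * real h + m * real_of_int (hprime k (int h))) / real (a * k))))"

end

theory Submission
  imports Defs "HOL-Analysis.Analysis"
begin

lemma gcd6: "even (k::nat) \<Longrightarrow> \<not> 3 dvd k \<Longrightarrow> gcd k 6 = 2"
proof -
  assume a: "even k" "\<not> 3 dvd k"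
  have "k mod 6 = 2 \<or> k mod 6 = 4" using a by presburger
  moreover have "gcd k 6 = gcd 6 (k mod 6)" by (metis gcd_red_nat gcd.commute)
  ultimately show ?thesis by (auto simp: gcd_non_0_nat)
qed

lemma coprime_kstar:
  fixes k :: nat and h :: int
  assumes "even k" "coprime h (int k)"
  shows "coprime h (int (kstar k))"
proof -
  have c2: "coprime h 2" using assms
    by (metis coprime_divisors dvd_refl even_of_nat_iff)
  show ?thesis
  proof (cases "gcd k 6 = 2")
    case True
    then have e: "int (kstar k) = 2^2 * int k" by (simp add: kstar_def)
    have "coprime h (2^2 * int k)" using c2 assms(2)
      by (metis coprime_mult_right_iff coprime_power_right_iff)
    then show ?thesis using e by metis
  next
    case False
    then have "3 dvd k" using gcd6 assms by blast
    then have "6 dvd k" using assms by presburger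
    then have "coprime h 6" using assms
      by (metis coprime_divisors dvd_refl int_dvd_int_iff of_nat_numeral)
    moreover have e: "int (kstar k) = 6^2 * int k" using False by (simp add: kstar_def)
    ultimately have "coprime h (6^2 * int k)" using assms(2)
      by (metis coprime_mult_right_iff coprime_power_right_iff)
    then show ?thesis using e by metis
  qed
qed

lemma hp:
  fixes k :: nat and h :: int
  assumes "even k" "coprime h (int k)"
  shows "[h * hprime k h = -1] (mod int (kstar k))"
proof -
  obtain x where "[h * x = 1] (mod int (kstar k))"
    using cong_solve_coprime_int coprime_kstar assms by blast
  then have "[h * (-x) = -1] (mod int (kstar k))"
    by (metis cong_minus_minus_iff minus_mult_right)
  then have "\<exists>h'. [h * h' = -1] (mod int (kstar k))" by blast
  then show ?thesis unfolding hprime_def by (rule someI_ex)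
qed

lemma dvd_kstar: "int (2 * k) dvd int (kstar k)"
  by (simp add: kstar_def)

lemma shift_key:
  fixes k :: nat and h :: nat
  assumes "even k" "coprime h k"
  shows "int (2*k) dvd hprime k (int h + int k) - hprime k (int h) - int k"
proof -
  let ?a = "hprime k (int h)" and ?b = "hprime k (int h + int k)"
  have ch: "coprime (int h) (int k)" using assms by simp
  have oh: "odd h" using assms by (metis coprime_common_divisor_nat dvd_refl even_Suc odd_one)
  have ch2: "coprime (int h + int k) (int k)" using ch
    by (simp add: coprime_iff_gcd_eq_1)
  have "[int h * ?a = -1] (mod int (2*k))"
    using hp[OF assms(1) ch] cong_dvd_modulus dvd_kstar by blast
  moreover have c2: "[(int h + int k) * ?b = -1] (mod int (2*k))"
    using hp[OF assms(1) ch2] cong_dvd_modulus dvd_kstar by blast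
  ultimately have d1: "int (2*k) dvd int h * ?a + 1" and d2: "int (2*k) dvd (int h + int k) * ?b + 1"
    by (simp_all add: cong_iff_dvd_diff)
  have "2 dvd (int h + int k) * ?b + 1"
    using d2 by (metis dvd_trans dvd_triv_left of_nat_mult of_nat_numeral)
  then have ob: "odd ?b" using oh assms(1) by auto
  obtain u where u: "?b = 2*u+1" using ob by (metis oddE)
  obtain q where q: "int h = 2*q+1" using oh by (metis even_of_nat_iff oddE)
  have e: "int h * (?b - ?a - int k) = ((int h + int k) * ?b + 1) - (int h * ?a + 1) - int (2*k) * (u + q + 1)"
  proof -
    have e0: "H * (B - A - K) = ((H + K) * B + 1) - (H * A + 1) - int 2 * K * (u + q + 1)"
      if "B = 2*u+1" "H = 2*q+1" for H A B K :: int
      using that by (simp add: algebra_simps)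
    show ?thesis using e0[OF u q, of ?a "int k"] by simp
  qed
  have "int (2*k) dvd int h * (?b - ?a - int k)"
    unfolding e using d1 d2 by (intro dvd_diff) auto
  moreover have "coprime (int (2*k)) (int h)"
    using ch oh by (simp add: coprime_commute)
  ultimately show ?thesis using coprime_dvd_mult_right_iff by blast
qed

lemma exp_shift:
  fixes x y :: real and j :: int
  assumes "x = y + of_int j"
  shows "exp (2 * pi * \<i> * complex_of_real x) = exp (2 * pi * \<i> * complex_of_real y)"
proof -
  have "2 * pi * \<i> * complex_of_real x = 2 * pi * \<i> * complex_of_real y + \<i> * (of_int j * (of_real pi * 2))"
    by (simp add: assms algebra_simps)
  then show ?thesis by simp
qed

theorem lemma2p4:
  fixes k :: nat and n m :: int
  assumes "even k" and "odd n" and "odd m"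
  shows "Kloos k 2 (of_int n) (of_int m) = 2 * Kloos k 1 (of_int n / 2) (of_int m / 2)"
proof -
  define f where "f h = exp (2 * pi * \<i> * complex_of_real
              ((- of_int n * real h + of_int m * real_of_int (hprime k (int h))) / real (2 * k)))" for h
  define A where "A = {h. h < k \<and> coprime h k}"
  have L: "Kloos k 2 (of_int n) (of_int m) = sum f {h. h < 2 * k \<and> coprime h (2 * k)}"
    by (simp add: Kloos_def f_def)
  have R: "Kloos k 1 (of_int n / 2) (of_int m / 2) = sum f A"
  proof -
    have r: "(- (real_of_int n / 2) * real x + real_of_int m / 2 * y) / real (1 * k)
       = (- real_of_int n * real x + real_of_int m * y) / real (2 * k)" for x y
      by (cases "k = 0") (simp_all add: field_simps)
    show ?thesis unfolding Kloos_def f_def A_def r by simp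
  qed
  have fin: "finite A" by (simp add: A_def)
  have split: "{h. h < 2 * k \<and> coprime h (2 * k)} = A \<union> (\<lambda>h. h + k) ` A"
  proof (intro equalityI subsetI)
    fix h assume "h \<in> {h. h < 2 * k \<and> coprime h (2 * k)}"
    then have h: "h < 2*k" "coprime h (2*k)" by auto
    then have ck: "coprime h k" by simp
    show "h \<in> A \<union> (\<lambda>h. h + k) ` A"
    proof (cases "h < k")
      case True then show ?thesis using ck by (simp add: A_def)
    next
      case False
      then have "gcd (h - k) k = gcd h k" by (simp add: gcd_diff1_nat)
      then have "h - k \<in> A" using h ck False unfolding A_def
        by (auto simp: coprime_iff_gcd_eq_1)
      then show ?thesis using False by (intro UnI2 image_eqI[where x="h-k"]) auto
    qed
  next
    fix h assume "h \<in> A \<union> (\<lambda>h. h + k) ` A"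
    then obtain x where x: "x \<in> A" "h = x \<or> h = x + k" by blast
    have cx: "coprime x k" "x < k" using x by (auto simp: A_def)
    have ox: "odd x" using cx assms(1) by (metis coprime_common_divisor_nat dvd_refl odd_one)
    have ch: "coprime h k" using x(2) cx by (auto simp: coprime_iff_gcd_eq_1)
    have "odd h" using x(2) ox assms(1) by auto
    then have "coprime h 2" by simp
    then have "coprime h (2 * k)" using ch by simp
    then show "h \<in> {h. h < 2 * k \<and> coprime h (2 * k)}" using x(2) cx by auto
  qed
  have disj: "A \<inter> (\<lambda>h. h + k) ` A = {}" by (auto simp: A_def)
  have inj: "inj_on (\<lambda>h. h + k) A" by (simp add: inj_on_def)
  have shift: "f (h + k) = f h" if "h \<in> A" for h
  proof -
    have ch: "coprime h k" using that by (simp add: A_def)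
    obtain t where t: "hprime k (int h + int k) - hprime k (int h) - int k = int (2*k) * t"
      using shift_key[OF assms(1) ch] by blast
    obtain a where a: "n = 2*a+1" using assms(2) by (metis oddE)
    obtain b where b: "m = 2*b+1" using assms(3) by (metis oddE)
    have kp: "k > 0" using that by (auto simp: A_def)
    have hh: "real_of_int (hprime k (int h + int k)) = real_of_int (hprime k (int h)) + real k + 2 * real k * of_int t"
      using arg_cong[OF t, of real_of_int] by (simp add: algebra_simps)
    show ?thesis unfolding f_def
      by (rule exp_shift[where j = "b - a + m * t"]) (use kp in \<open>simp add: hh a b field_simps\<close>)
  qed
  have "sum f ((\<lambda>h. h + k) ` A) = sum f A"
    using sum.reindex[OF inj, of f] shift by (simp add: o_def)
  then show ?thesis unfolding L R split
    using sum.union_disjoint[OF fin _ disj, of f] fin by simp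
qed

end
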